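(* Let $\underline{R}$, $\underline{T}$ be $n$-tuples of bounded operators on Hilbert spaces $\mathcal{L}$, $\mathcal{M}$ respectively. Then the maximal commuting piece of $(R_1\oplus T_1,\ldots,R_n\oplus T_n)$ on $\mathcal{L}\oplus\mathcal{M}$ is $(R_1^c\oplus T_1^c,\ldots,R_n^c\oplus T_n^c)$ acting on $\mathcal{L}^c\oplus\mathcal{M}^c$, where $\mathcal{L}^c=\mathcal{L}^c(\underline{R})$, $\mathcal{M}^c=\mathcal{M}^c(\underline{T})$. The maximal commuting piece of $(R_1\otimes I,\ldots,R_n\otimes I)$ on $\mathcal{L}\otimes\mathcal{M}$ is $(R_1^c\otimes I,\ldots,R_n^c\otimes I)$ acting on $\mathcal{L}^c\otimes\mathcal{M}$.
   Context: For a tuple $\underline{R}$ on $\mathcal{L}$, $\mathcal{L}^c(\underline{R})$ is the largest closed subspace of $\mathcal{L}$ invariant under every $R_i^*$ such that $R_i^*R_j^*h=R_j^*R_i^*h$ for all $h$ in it and all $i,j$; the maximal commuting piece of $\underline{R}$ is $\underline{R}^c=(R^c_1,\ldots,R^c_n)$ with $R^c_i=P_{\mathcal{L}^c(\underline{R})}R_i|_{\mathcal{L}^c(\underline{R})}$, acting on $\mathcal{L}^c(\underline{R})$. *)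

theory Defs
  imports "HOL-Analysis.Analysis"
begin

text \<open>The distribution has no complex Hilbert spaces, so we introduce them.
  The inner product is conjugate-linear in the first and linear in the second argument.\<close>

class complex_inner = real_normed_vector +
  fixes scaleC :: "complex \<Rightarrow> 'a \<Rightarrow> 'a" (infixr \<open>*\<^sub>C\<close> 75)
    and cinner :: "'a \<Rightarrow> 'a \<Rightarrow> complex"
  assumes scaleC_add_right: "a *\<^sub>C (x + y) = a *\<^sub>C x + a *\<^sub>C y"
    and scaleC_add_left: "(a + b) *\<^sub>C x = a *\<^sub>C x + b *\<^sub>C x"
    and scaleC_scaleC: "a *\<^sub>C (b *\<^sub>C x) = (a * b) *\<^sub>C x"
    and scaleC_one: "1 *\<^sub>C x = x"
    and scaleR_scaleC: "scaleR r x = of_real r *\<^sub>C x"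
    and cinner_cnj: "cinner x y = cnj (cinner y x)"
    and cinner_add_right: "cinner x (y + z) = cinner x y + cinner x z"
    and cinner_scaleC_right: "cinner x (a *\<^sub>C y) = a * cinner x y"
    and cinner_ge_zero: "0 \<le> Re (cinner x x)"
    and cinner_eq_zero_iff: "cinner x x = 0 \<longleftrightarrow> x = 0"
    and norm_eq_sqrt_cinner: "norm x = sqrt (Re (cinner x x))"

class chilbert_space = complex_inner + complete_space

text \<open>External orthogonal direct sum: the product type.\<close>

instantiation prod :: (complex_inner, complex_inner) complex_inner
begin

definition scaleC_prod_def: "a *\<^sub>C x = (a *\<^sub>C fst x, a *\<^sub>C snd x)"
definition cinner_prod_def: "cinner x y = cinner (fst x) (fst y) + cinner (snd x) (snd y)"

instance
proof
  fix a b :: complex and x y z :: "'a \<times> 'b" and r :: real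
  show "a *\<^sub>C (x + y) = a *\<^sub>C x + a *\<^sub>C y"
    by (simp add: scaleC_prod_def scaleC_add_right)
  show "(a + b) *\<^sub>C x = a *\<^sub>C x + b *\<^sub>C x"
    by (simp add: scaleC_prod_def scaleC_add_left)
  show "a *\<^sub>C (b *\<^sub>C x) = (a * b) *\<^sub>C x"
    by (simp add: scaleC_prod_def scaleC_scaleC)
  show "1 *\<^sub>C x = x"
    by (simp add: scaleC_prod_def scaleC_one)
  show "scaleR r x = of_real r *\<^sub>C x"
    by (simp add: scaleC_prod_def scaleR_scaleC scaleR_prod_def)
  show "cinner x y = cnj (cinner y x)"
    by (simp add: cinner_prod_def cinner_cnj[of "fst x"] cinner_cnj[of "snd x"])
  show "cinner x (y + z) = cinner x y + cinner x z"
    by (simp add: cinner_prod_def cinner_add_right)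
  show "cinner x (a *\<^sub>C y) = a * cinner x y"
    by (simp add: cinner_prod_def scaleC_prod_def cinner_scaleC_right algebra_simps)
  show "0 \<le> Re (cinner x x)"
    using cinner_ge_zero[of "fst x"] cinner_ge_zero[of "snd x"]
    by (simp add: cinner_prod_def)
  have n1: "Re (cinner (fst x) (fst x)) = (norm (fst x))\<^sup>2"
    using cinner_ge_zero[of "fst x"] by (simp add: norm_eq_sqrt_cinner)
  have n2: "Re (cinner (snd x) (snd x)) = (norm (snd x))\<^sup>2"
    using cinner_ge_zero[of "snd x"] by (simp add: norm_eq_sqrt_cinner)
  have i1: "Im (cinner (fst x) (fst x)) = 0"
    using cinner_cnj[of "fst x" "fst x"] by (metis cnj.sel(2) neg_equal_zero)
  have i2: "Im (cinner (snd x) (snd x)) = 0"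
    using cinner_cnj[of "snd x" "snd x"] by (metis cnj.sel(2) neg_equal_zero)
  show "cinner x x = 0 \<longleftrightarrow> x = 0"
  proof
    assume "cinner x x = 0"
    then have "Re (cinner x x) = 0" by simp
    then have "(norm (fst x))\<^sup>2 + (norm (snd x))\<^sup>2 = 0"
      using n1 n2 by (simp add: cinner_prod_def)
    then have "fst x = 0" "snd x = 0"
      by (simp_all add: add_nonneg_eq_0_iff)
    then show "x = 0" by (simp add: prod_eq_iff)
  next
    assume "x = 0"
    then show "cinner x x = 0"
      using cinner_eq_zero_iff[of "0::'a"] cinner_eq_zero_iff[of "0::'b"]
      by (simp add: cinner_prod_def)
  qed
  show "norm x = sqrt (Re (cinner x x))"
    using n1 n2 by (simp add: cinner_prod_def norm_prod_def)
qed

end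

instance prod :: (chilbert_space, chilbert_space) chilbert_space ..

definition clinear :: "('a::complex_inner \<Rightarrow> 'b::complex_inner) \<Rightarrow> bool" where
  "clinear f \<longleftrightarrow> (\<forall>x y. f (x + y) = f x + f y) \<and> (\<forall>c x. f (c *\<^sub>C x) = c *\<^sub>C f x)"

definition bounded_clinear :: "('a::complex_inner \<Rightarrow> 'b::complex_inner) \<Rightarrow> bool" where
  "bounded_clinear f \<longleftrightarrow> clinear f \<and> (\<exists>K. \<forall>x. norm (f x) \<le> norm x * K)"

definition csubspace :: "'a::complex_inner set \<Rightarrow> bool" where
  "csubspace S \<longleftrightarrow> 0 \<in> S \<and> (\<forall>x\<in>S. \<forall>y\<in>S. x + y \<in> S) \<and> (\<forall>c. \<forall>x\<in>S. c *\<^sub>C x \<in> S)"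

definition closed_csubspace :: "'a::complex_inner set \<Rightarrow> bool" where
  "closed_csubspace S \<longleftrightarrow> csubspace S \<and> closed S"

definition cspan :: "'a::complex_inner set \<Rightarrow> 'a set" where
  "cspan X = \<Inter> {S. csubspace S \<and> X \<subseteq> S}"

definition adjoint :: "('a::complex_inner \<Rightarrow> 'b::complex_inner) \<Rightarrow> ('b \<Rightarrow> 'a)" where
  "adjoint A = (THE B. \<forall>x y. cinner (A x) y = cinner x (B y))"

definition proj :: "'a::complex_inner set \<Rightarrow> 'a \<Rightarrow> 'a" where
  "proj S x = (THE y. y \<in> S \<and> (\<forall>z\<in>S. cinner z (x - y) = 0))"

definition comm_inv_subspace ::
  "nat \<Rightarrow> (nat \<Rightarrow> 'a::complex_inner \<Rightarrow> 'a) \<Rightarrow> 'a set \<Rightarrow> bool" where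
  "comm_inv_subspace n R S \<longleftrightarrow> closed_csubspace S
     \<and> (\<forall>i<n. adjoint (R i) ` S \<subseteq> S)
     \<and> (\<forall>h\<in>S. \<forall>i<n. \<forall>j<n. adjoint (R i) (adjoint (R j) h) = adjoint (R j) (adjoint (R i) h))"

definition max_comm_space :: "nat \<Rightarrow> (nat \<Rightarrow> 'a::complex_inner \<Rightarrow> 'a) \<Rightarrow> 'a set" where
  "max_comm_space n R =
     (THE S. comm_inv_subspace n R S \<and> (\<forall>S'. comm_inv_subspace n R S' \<longrightarrow> S' \<subseteq> S))"

text \<open>The i-th component of the maximal commuting piece, P R_i restricted to the
  space (its values are only relevant on max_comm_space n R).\<close>
definition max_comm_piece ::
  "nat \<Rightarrow> (nat \<Rightarrow> 'a::complex_inner \<Rightarrow> 'a) \<Rightarrow> nat \<Rightarrow> 'a \<Rightarrow> 'a" where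
  "max_comm_piece n R i = (\<lambda>x. proj (max_comm_space n R) (R i x))"

definition dsum_op :: "('a \<Rightarrow> 'a) \<Rightarrow> ('b \<Rightarrow> 'b) \<Rightarrow> ('a \<times> 'b \<Rightarrow> 'a \<times> 'b)" where
  "dsum_op A B = (\<lambda>(x, y). (A x, B y))"

text \<open>tp realises 'c as the Hilbert tensor product of 'a and 'b:
  tp is bilinear, multiplicative on inner products, and elementary tensors
  have dense span.\<close>
definition hilbert_tensor :: "('a::complex_inner \<Rightarrow> 'b::complex_inner \<Rightarrow> 'c::complex_inner) \<Rightarrow> bool" where
  "hilbert_tensor tp \<longleftrightarrow>
     (\<forall>y. clinear (\<lambda>x. tp x y)) \<and> (\<forall>x. clinear (\<lambda>y. tp x y))
     \<and> (\<forall>x x' y y'. cinner (tp x y) (tp x' y') = cinner x x' * cinner y y')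
     \<and> closure (cspan {tp x y | x y. True}) = UNIV"

text \<open>A is the operator R \<otimes> I on the tensor product realised by tp.\<close>
definition is_tensor_id :: "('a::complex_inner \<Rightarrow> 'b::complex_inner \<Rightarrow> 'c::complex_inner)
    \<Rightarrow> ('a \<Rightarrow> 'a) \<Rightarrow> ('c \<Rightarrow> 'c) \<Rightarrow> bool" where
  "is_tensor_id tp R A \<longleftrightarrow> bounded_clinear A \<and> (\<forall>x y. A (tp x y) = tp (R x) y)"

end

theory Submission
  imports Defs
begin


lemma scaleC_zero_left[simp]: "(0::complex) *\<^sub>C (x::'a::complex_inner) = 0"
  by (metis of_real_0 scaleR_scaleC scaleR_zero_left)
lemma scaleC_zero_right[simp]: "a *\<^sub>C (0::'a::complex_inner) = 0"
  using scaleC_add_right[of a 0 0] by simp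
lemma scaleC_minus_one: "(-1::complex) *\<^sub>C (x::'a::complex_inner) = - x"
  by (metis of_real_1 of_real_minus scaleR_minus1_left scaleR_scaleC)
lemma scaleC_minus_right: "a *\<^sub>C (- x::'a::complex_inner) = - (a *\<^sub>C x)"
proof -
  have "a *\<^sub>C (- x) + a *\<^sub>C x = 0" using scaleC_add_right[of a "-x" x] by simp
  then show ?thesis by (simp add: eq_neg_iff_add_eq_0)
qed
lemma scaleC_diff_right: "a *\<^sub>C (x - y::'a::complex_inner) = a *\<^sub>C x - a *\<^sub>C y"
  using scaleC_add_right[of a "x - y" y] by (simp add: eq_diff_eq)
lemma scaleC_minus_left: "(- a) *\<^sub>C (x::'a::complex_inner) = - (a *\<^sub>C x)"
proof -
  have "(- a) *\<^sub>C x + a *\<^sub>C x = 0" using scaleC_add_left[of "-a" a x] by simp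
  then show ?thesis by (simp add: eq_neg_iff_add_eq_0)
qed
lemma scaleC_diff_left: "(a - b) *\<^sub>C (x::'a::complex_inner) = a *\<^sub>C x - b *\<^sub>C x"
  using scaleC_add_left[of "a - b" b x] by (simp add: eq_diff_eq)

lemma cinner_add_left: "cinner (x + y) (z::'a::complex_inner) = cinner x z + cinner y z"
proof -
  have "cinner (x + y) z = cnj (cinner z (x + y))" by (rule cinner_cnj)
  also have "\<dots> = cnj (cinner z x) + cnj (cinner z y)" by (simp only: cinner_add_right complex_cnj_add)
  also have "\<dots> = cinner x z + cinner y z" by (simp only: cinner_cnj[of x z] cinner_cnj[of y z] complex_cnj_cnj)
  finally show ?thesis .
qed
lemma cinner_scaleC_left: "cinner (a *\<^sub>C x) (z::'a::complex_inner) = cnj a * cinner x z"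
proof -
  have "cinner (a *\<^sub>C x) z = cnj (cinner z (a *\<^sub>C x))" by (rule cinner_cnj)
  also have "\<dots> = cnj a * cnj (cinner z x)" by (simp only: cinner_scaleC_right complex_cnj_mult)
  also have "\<dots> = cnj a * cinner x z" by (simp only: cinner_cnj[of x z] complex_cnj_cnj)
  finally show ?thesis .
qed
lemma cinner_zero_right[simp]: "cinner x (0::'a::complex_inner) = 0"
  using cinner_add_right[of x 0 0] by simp
lemma cinner_zero_left[simp]: "cinner (0::'a::complex_inner) x = 0"
  using cinner_add_left[of 0 0 x] by simp
lemma cinner_minus_right: "cinner x (- y::'a::complex_inner) = - cinner x y"
proof -
  have "cinner x (- y) + cinner x y = 0" using cinner_add_right[of x "-y" y] by simp
  then show ?thesis by (simp add: eq_neg_iff_add_eq_0)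
qed
lemma cinner_minus_left: "cinner (- x) (y::'a::complex_inner) = - cinner x y"
proof -
  have "cinner (- x) y + cinner x y = 0" using cinner_add_left[of "-x" x y] by simp
  then show ?thesis by (simp add: eq_neg_iff_add_eq_0)
qed
lemma cinner_diff_right: "cinner x (y - z::'a::complex_inner) = cinner x y - cinner x z"
  using cinner_add_right[of x "y - z" z] by (simp add: eq_diff_eq)
lemma cinner_diff_left: "cinner (x - y) (z::'a::complex_inner) = cinner x z - cinner y z"
  using cinner_add_left[of "x - y" y z] by (simp add: eq_diff_eq)

lemma cinner_self_Im: "Im (cinner x (x::'a::complex_inner)) = 0"
  by (metis cinner_cnj cnj.sel(2) neg_equal_zero)
lemma norm_sq_cinner: "(norm (x::'a::complex_inner))\<^sup>2 = Re (cinner x x)"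
  by (simp add: norm_eq_sqrt_cinner cinner_ge_zero)
lemma cinner_self: "cinner x (x::'a::complex_inner) = complex_of_real ((norm x)\<^sup>2)"
  by (simp add: norm_sq_cinner complex_eq_iff cinner_self_Im)

lemma norm_scaleC: "norm (a *\<^sub>C (x::'a::complex_inner)) = cmod a * norm x"
proof -
  have "(norm (a *\<^sub>C x))\<^sup>2 = (cmod a * norm x)\<^sup>2"
  proof -
    have "cinner (a *\<^sub>C x) (a *\<^sub>C x) = (a * cnj a) * cinner x x"
      by (simp add: cinner_scaleC_left cinner_scaleC_right)
    also have "\<dots> = complex_of_real ((cmod a)\<^sup>2 * (norm x)\<^sup>2)"
      using complex_norm_square[of a] by (simp add: cinner_self)
    finally show ?thesis by (simp add: norm_sq_cinner power_mult_distrib)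
  qed
  then show ?thesis by (simp add: power2_eq_iff_nonneg)
qed

lemma pythag: "cinner x y = 0 \<Longrightarrow> (norm (x + y::'a::complex_inner))\<^sup>2 = (norm x)\<^sup>2 + (norm y)\<^sup>2"
  using cinner_cnj[of y x]
  by (simp add: norm_sq_cinner cinner_add_left cinner_add_right)

lemma cauchy_schwarz: "cmod (cinner x (y::'a::complex_inner)) \<le> norm x * norm y"
proof (cases "x = 0")
  case True then show ?thesis by simp
next
  case False
  define t where "t = cinner x y / cinner x x"
  define w where "w = y - t *\<^sub>C x"
  have xx: "cinner x x \<noteq> 0" using False cinner_eq_zero_iff by blast
  have "cinner x w = 0" unfolding w_def t_def
    using xx by (simp add: cinner_diff_right cinner_scaleC_right)
  then have o: "cinner (t *\<^sub>C x) w = 0" by (simp add: cinner_scaleC_left)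
  have "y = t *\<^sub>C x + w" by (simp add: w_def)
  then have "(norm y)\<^sup>2 = (norm (t *\<^sub>C x))\<^sup>2 + (norm w)\<^sup>2" using pythag[OF o] by simp
  then have "(cmod t * norm x)\<^sup>2 \<le> (norm y)\<^sup>2" by (simp add: norm_scaleC)
  then have a: "cmod t * norm x \<le> norm y"
    by (rule power2_le_imp_le) simp_all
  have nx: "norm x > 0" using False by simp
  have "cmod t = cmod (cinner x y) / (norm x)\<^sup>2"
    by (simp add: t_def cinner_self norm_divide norm_power)
  then have "cmod (cinner x y) = cmod t * (norm x)\<^sup>2" using nx by simp
  also have "\<dots> = (cmod t * norm x) * norm x" by (simp add: power2_eq_square)
  also have "\<dots> \<le> norm y * norm x" using a nx by (simp add: mult_right_mono)
  finally show ?thesis by (simp add: mult.commute)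
qed


lemma scaleR_conv_C: "r *\<^sub>R (c::complex) = complex_of_real r * c"
  by (simp add: scaleR_conv_of_real)

lemma bounded_linear_cinner_right: "bounded_linear (cinner (z::'a::complex_inner))"
proof (rule bounded_linear_intro[where K = "norm z"])
  show "cinner z (x + y) = cinner z x + cinner z y" for x y by (rule cinner_add_right)
  show "cinner z (r *\<^sub>R x) = r *\<^sub>R cinner z x" for r x
    by (simp add: scaleR_scaleC cinner_scaleC_right scaleR_conv_C)
  show "norm (cinner z x) \<le> norm x * norm z" for x
    using cauchy_schwarz[of z x] by (simp add: mult.commute)
qed

lemma bounded_linear_cinner_left: "bounded_linear (\<lambda>x. cinner x (z::'a::complex_inner))"
proof (rule bounded_linear_intro[where K = "norm z"])
  show "cinner (x + y) z = cinner x z + cinner y z" for x y by (rule cinner_add_left)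
  show "cinner (r *\<^sub>R x) z = r *\<^sub>R cinner x z" for r x
    by (simp add: scaleR_scaleC cinner_scaleC_left scaleR_conv_C)
  show "norm (cinner x z) \<le> norm x * norm z" for x
    using cauchy_schwarz[of x z] by simp
qed

lemma continuous_cinner_right: "continuous_on UNIV (cinner (z::'a::complex_inner))"
  using bounded_linear_cinner_right linear_continuous_on by blast
lemma continuous_cinner_left: "continuous_on UNIV (\<lambda>x. cinner x (z::'a::complex_inner))"
  using bounded_linear_cinner_left linear_continuous_on by blast

lemma bclin_add: "bounded_clinear f \<Longrightarrow> f (x + y) = f x + f y"
  by (simp add: bounded_clinear_def clinear_def)
lemma bclin_scaleC: "bounded_clinear f \<Longrightarrow> f (c *\<^sub>C x) = c *\<^sub>C f x"
  by (simp add: bounded_clinear_def clinear_def)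

lemma bclin_blin: assumes "bounded_clinear (f::'a::complex_inner \<Rightarrow> 'b::complex_inner)"
  shows "bounded_linear f"
proof -
  obtain K where K: "\<forall>x. norm (f x) \<le> norm x * K" using assms by (auto simp: bounded_clinear_def)
  show ?thesis
    by (rule bounded_linear_intro[where K = K])
      (auto simp: bclin_add[OF assms] bclin_scaleC[OF assms] scaleR_scaleC K)
qed

lemma bclin_zero: "bounded_clinear f \<Longrightarrow> f 0 = 0"
  using bclin_blin linear_simps(3) by blast
lemma bclin_diff: "bounded_clinear f \<Longrightarrow> f (x - y) = f x - f y"
  using bclin_blin linear_simps(2) by blast
lemma bclin_cont: "bounded_clinear f \<Longrightarrow> continuous_on UNIV f"
  using bclin_blin linear_continuous_on by blast

lemma bclin_comp: assumes "bounded_clinear f" "bounded_clinear g"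
  shows "bounded_clinear (\<lambda>x. f (g x))"
proof -
  obtain K where K: "\<forall>x. norm (f x) \<le> norm x * K" using assms by (auto simp: bounded_clinear_def)
  obtain L where L: "\<forall>x. norm (g x) \<le> norm x * L" using assms by (auto simp: bounded_clinear_def)
  have "norm (f (g x)) \<le> norm x * (max L 0 * max K 0)" for x
  proof -
    have "norm (f (g x)) \<le> norm (g x) * max K 0"
      using K[rule_format, of "g x"] by (meson max.cobounded1 mult_left_mono norm_ge_zero order_trans)
    also have "\<dots> \<le> (norm x * max L 0) * max K 0"
      using L[rule_format, of x] by (meson max.cobounded1 max.cobounded2 mult_left_mono mult_right_mono norm_ge_zero order_trans)
    finally show ?thesis by (simp add: mult.assoc)
  qed
  then show ?thesis using assms
    by (auto simp: bounded_clinear_def clinear_def)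
qed

lemma bclin_minus_fun: assumes "bounded_clinear f" "bounded_clinear g"
  shows "bounded_clinear (\<lambda>x. f x - g x)"
proof -
  obtain K where K: "\<forall>x. norm (f x) \<le> norm x * K" using assms by (auto simp: bounded_clinear_def)
  obtain L where L: "\<forall>x. norm (g x) \<le> norm x * L" using assms by (auto simp: bounded_clinear_def)
  have "norm (f x - g x) \<le> norm x * (K + L)" for x
    using norm_triangle_ineq4[of "f x" "g x"] K L by (simp add: distrib_left) (smt (verit))
  then show ?thesis using assms
    by (auto simp: bounded_clinear_def clinear_def scaleC_diff_right)
qed

lemma csubspace_0: "csubspace S \<Longrightarrow> 0 \<in> S" by (simp add: csubspace_def)
lemma csubspace_add: "csubspace S \<Longrightarrow> x \<in> S \<Longrightarrow> y \<in> S \<Longrightarrow> x + y \<in> S" by (simp add: csubspace_def)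
lemma csubspace_scaleC: "csubspace S \<Longrightarrow> x \<in> S \<Longrightarrow> c *\<^sub>C x \<in> S" by (simp add: csubspace_def)
lemma csubspace_minus: "csubspace S \<Longrightarrow> x \<in> S \<Longrightarrow> - x \<in> S"
  using csubspace_scaleC[of S x "-1"] by (simp add: scaleC_minus_one)
lemma csubspace_diff: "csubspace S \<Longrightarrow> x \<in> S \<Longrightarrow> y \<in> S \<Longrightarrow> x - y \<in> S"
  by (metis csubspace_add csubspace_minus diff_conv_add_uminus)
lemma csubspace_scaleR: "csubspace S \<Longrightarrow> x \<in> S \<Longrightarrow> r *\<^sub>R x \<in> S"
  by (simp add: csubspace_scaleC scaleR_scaleC)

lemma continuous_scaleC: "continuous_on UNIV (\<lambda>x::'a::complex_inner. c *\<^sub>C x)"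
proof -
  have "bounded_linear (\<lambda>x::'a. c *\<^sub>C x)"
    by (rule bounded_linear_intro[where K = "cmod c"])
       (auto simp: scaleC_add_right scaleR_scaleC scaleC_scaleC mult.commute norm_scaleC)
  then show ?thesis using linear_continuous_on by blast
qed

lemma csubspace_closure: assumes "csubspace (S::'a::complex_inner set)"
  shows "csubspace (closure S)"
proof -
  have add1: "a + x \<in> closure S" if "a \<in> S" "x \<in> closure S" for a x
  proof -
    have "(\<lambda>x. a + x) ` closure S \<subseteq> closure S"
      by (rule image_closure_subset) (auto intro!: continuous_intros closure_subset[THEN subsetD]
          csubspace_add[OF assms] that(1))
    then show ?thesis using that by blast
  qed
  have add2: "x + b \<in> closure S" if "b \<in> closure S" "x \<in> closure S" for x b
  proof -
    have "(\<lambda>x. x + b) ` closure S \<subseteq> closure S"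
      by (rule image_closure_subset) (auto intro!: continuous_intros add1 that(1))
    then show ?thesis using that by blast
  qed
  have sc: "c *\<^sub>C x \<in> closure S" if "x \<in> closure S" for c x
  proof -
    have "(\<lambda>x. c *\<^sub>C x) ` closure S \<subseteq> closure S"
      by (rule image_closure_subset)
        (auto intro: continuous_on_subset[OF continuous_scaleC] closure_subset[THEN subsetD]
          csubspace_scaleC[OF assms])
    then show ?thesis using that by blast
  qed
  show ?thesis unfolding csubspace_def
    using add2 sc closure_subset csubspace_0[OF assms] by blast
qed

lemma csubspace_cspan: "csubspace (cspan X)"
  unfolding cspan_def csubspace_def by auto
lemma cspan_superset: "X \<subseteq> cspan X"
  unfolding cspan_def by auto
lemma cspan_least: "csubspace V \<Longrightarrow> X \<subseteq> V \<Longrightarrow> cspan X \<subseteq> V"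
  unfolding cspan_def by auto

lemma closed_csubspace_ccspan: "closed_csubspace (closure (cspan X))"
  by (simp add: closed_csubspace_def csubspace_closure csubspace_cspan)

lemma ccspan_least: "closed_csubspace V \<Longrightarrow> X \<subseteq> V \<Longrightarrow> closure (cspan X) \<subseteq> V"
  unfolding closed_csubspace_def by (meson closure_minimal cspan_least)

lemma ccspan_superset: "X \<subseteq> closure (cspan X)"
  using cspan_superset closure_subset by blast

lemma closed_csubspace_vimage: assumes "bounded_clinear f" "closed_csubspace S"
  shows "closed_csubspace (f -` S)"
proof -
  have "closed (f -` S)"
    using assms continuous_closed_vimage[of S f] bclin_cont[OF assms(1)]
    by (simp add: closed_csubspace_def continuous_on_eq_continuous_within)
  moreover have "csubspace (f -` S)"
    using assms(2) unfolding closed_csubspace_def csubspace_def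
    by (auto simp: bclin_zero[OF assms(1)] bclin_add[OF assms(1)] bclin_scaleC[OF assms(1)])
  ultimately show ?thesis by (simp add: closed_csubspace_def)
qed

lemma closed_csubspace_zero: "closed_csubspace {0::'a::complex_inner}"
  by (simp add: closed_csubspace_def csubspace_def)

lemma closed_csubspace_eq: assumes "bounded_clinear f" "bounded_clinear g"
  shows "closed_csubspace {x. f x = g x}"
proof -
  have "{x. f x = g x} = (\<lambda>x. f x - g x) -` {0}" by auto
  then show ?thesis using closed_csubspace_vimage[OF bclin_minus_fun[OF assms] closed_csubspace_zero]
    by simp
qed

lemma closed_csubspace_orth: "closed_csubspace {x::'a::complex_inner. cinner x v = 0}"
proof -
  have "closed {x::'a. cinner x v = 0}"
    by (intro closed_Collect_eq continuous_cinner_left continuous_on_const)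
  then show ?thesis
    by (simp add: closed_csubspace_def csubspace_def cinner_add_left cinner_scaleC_left)
qed

lemma closed_csubspace_orth2: "closed_csubspace {x::'a::complex_inner. cinner v x = 0}"
proof -
  have "{x::'a. cinner v x = 0} = {x. cinner x v = 0}"
    using cinner_cnj by (metis complex_cnj_zero_iff)
  then show ?thesis using closed_csubspace_orth by simp
qed

lemma dense_orth: assumes "closure (cspan X) = UNIV" "\<forall>x\<in>X. cinner x v = 0"
  shows "v = 0"
proof -
  have "closure (cspan X) \<subseteq> {x. cinner x v = 0}"
    by (rule ccspan_least[OF closed_csubspace_orth]) (use assms in auto)
  then have "cinner v v = 0" using assms(1) by auto
  then show ?thesis by (simp add: cinner_eq_zero_iff)
qed

lemma cinner_ext: "(\<And>x. cinner x a = cinner x (b::'a::complex_inner)) \<Longrightarrow> a = b"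
  by (metis cinner_diff_right cinner_eq_zero_iff right_minus_eq)


section \<open>Projection theorem\<close>

lemma parallelogram: "(norm (a + b::'a::complex_inner))\<^sup>2 + (norm (a - b))\<^sup>2 = 2 * (norm a)\<^sup>2 + 2 * (norm b)\<^sup>2"
  by (simp add: norm_sq_cinner cinner_add_left cinner_add_right cinner_diff_left cinner_diff_right)

lemma norm_sq_diff_scale:
  "(norm (w - t *\<^sub>C z::'a::complex_inner))\<^sup>2 = (norm w)\<^sup>2 - 2 * Re (t * cinner w z) + (cmod t)\<^sup>2 * (norm z)\<^sup>2"
proof -
  have e: "Re (cnj t * cinner z w) = Re (t * cinner w z)"
    using cinner_cnj[of z w] by simp
  have f: "Re (cnj t * (t * cinner z z)) = (cmod t)\<^sup>2 * (norm z)\<^sup>2"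
  proof -
    have "cnj t * (t * cinner z z) = complex_of_real ((cmod t)\<^sup>2 * (norm z)\<^sup>2)"
      using complex_norm_square[of t] by (simp add: cinner_self mult.assoc[symmetric] mult.commute[of "cnj t"])
    then show ?thesis by simp
  qed
  have "cinner (w - t *\<^sub>C z) (w - t *\<^sub>C z) = cinner w w - t * cinner w z - (cnj t * cinner z w - cnj t * (t * cinner z z))"
    by (simp add: cinner_diff_left cinner_diff_right cinner_scaleC_left cinner_scaleC_right) (simp add: algebra_simps)
  then have "(norm (w - t *\<^sub>C z))\<^sup>2 = Re (cinner w w) - Re (t * cinner w z) - (Re (cnj t * cinner z w) - Re (cnj t * (t * cinner z z)))"
    by (simp add: norm_sq_cinner)
  then show ?thesis using e f by (simp add: norm_sq_cinner)
qed

lemma proj_exists: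
  fixes S :: "'a::chilbert_space set"
  assumes S: "closed_csubspace S"
  shows "\<exists>y\<in>S. \<forall>z\<in>S. cinner z (x - y) = 0"
proof -
  have sub: "csubspace S" and cl: "closed S" using S by (auto simp: closed_csubspace_def)
  define D where "D = Inf ((\<lambda>s. (norm (x - s))\<^sup>2) ` S)"
  have ne: "(\<lambda>s. (norm (x - s))\<^sup>2) ` S \<noteq> {}" using csubspace_0[OF sub] by auto
  have bdd: "bdd_below ((\<lambda>s. (norm (x - s))\<^sup>2) ` S)" by (rule bdd_belowI[of _ 0]) auto
  have Dle: "D \<le> (norm (x - s))\<^sup>2" if "s \<in> S" for s
    unfolding D_def using bdd that by (auto intro: cInf_lower)
  have D0: "D \<ge> 0" unfolding D_def using ne by (auto intro: cInf_greatest)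
  have "\<exists>s\<in>S. (norm (x - s))\<^sup>2 < D + 1 / real (Suc k)" for k
  proof (rule ccontr)
    assume "\<not> ?thesis"
    then have "\<forall>s\<in>S. D + 1 / real (Suc k) \<le> (norm (x - s))\<^sup>2" by auto
    then have "D + 1 / real (Suc k) \<le> D" unfolding D_def by (intro cInf_greatest[OF ne]) auto
    then show False by (simp add: add_le_same_cancel1)
  qed
  then obtain s where sS: "\<And>k. s k \<in> S" and sD: "\<And>k. (norm (x - s k))\<^sup>2 < D + 1 / real (Suc k)"
    by metis
  have bound: "(norm (s m - s k))\<^sup>2 \<le> 2 / real (Suc m) + 2 / real (Suc k)" for m k
  proof -
    define mid where "mid = (1/2::real) *\<^sub>R (s m + s k)"
    have midS: "mid \<in> S" unfolding mid_def
      by (intro csubspace_scaleR[OF sub] csubspace_add[OF sub] sS)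
    have ab: "(x - s m) + (x - s k) = 2 *\<^sub>R (x - mid)" by (simp add: mid_def algebra_simps scaleR_2)
    have "(norm ((x - s m) + (x - s k)))\<^sup>2 = 4 * (norm (x - mid))\<^sup>2"
      unfolding ab by (simp add: power2_eq_square)
    then have ge: "(norm ((x - s m) + (x - s k)))\<^sup>2 \<ge> 4 * D" using Dle[OF midS] by simp
    have "(x - s m) - (x - s k) = s k - s m" by simp
    then have "(norm (s k - s m))\<^sup>2 = 2 * (norm (x - s m))\<^sup>2 + 2 * (norm (x - s k))\<^sup>2
          - (norm ((x - s m) + (x - s k)))\<^sup>2"
      using parallelogram[of "x - s m" "x - s k"] by simp
    also have "\<dots> \<le> 2 * (D + 1 / real (Suc m)) + 2 * (D + 1 / real (Suc k)) - 4 * D"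
      using sD[of m] sD[of k] ge by simp
    finally show ?thesis by (simp add: norm_minus_commute)
  qed
  have "Cauchy s"
  proof (rule metric_CauchyI)
    fix e :: real assume e: "e > 0"
    obtain M :: nat where M: "4 / e\<^sup>2 < real M" using reals_Archimedean2 by blast
    have Mpos: "real M > 0" using M e by (smt (verit) divide_pos_pos zero_less_power)
    have "4 / real (Suc M) < e\<^sup>2"
      using M e Mpos by (simp add: field_simps) (smt (verit) mult_left_mono zero_le_power2)
    show "\<exists>M. \<forall>m\<ge>M. \<forall>n\<ge>M. dist (s m) (s n) < e"
    proof (intro exI allI impI)
      fix m n assume mn: "M \<le> m" "M \<le> n"
      have "2 / real (Suc m) \<le> 2 / real (Suc M)" "2 / real (Suc n) \<le> 2 / real (Suc M)"
        using mn by (simp_all add: frac_le)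
      then have "(norm (s m - s n))\<^sup>2 < e\<^sup>2"
        using bound[of m n] \<open>4 / real (Suc M) < e\<^sup>2\<close> by simp
      then show "dist (s m) (s n) < e"
        using e by (simp add: dist_norm power_less_imp_less_base)
    qed
  qed
  then obtain y where lim: "s \<longlonglongrightarrow> y" using Cauchy_convergent_iff convergent_def by blast
  have yS: "y \<in> S" using closed_sequentially[OF cl] sS lim by blast
  have "(\<lambda>k. (norm (x - s k))\<^sup>2) \<longlonglongrightarrow> (norm (x - y))\<^sup>2"
    by (intro tendsto_intros lim)
  moreover have "(\<lambda>k. D + 1 / real (Suc k)) \<longlonglongrightarrow> D"
    using tendsto_add[OF tendsto_const[of D] LIMSEQ_inverse_real_of_nat] by (simp add: inverse_eq_divide)
  ultimately have yD: "(norm (x - y))\<^sup>2 \<le> D"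
    by (rule LIMSEQ_le) (use sD less_imp_le in blast)
  have orth: "cinner z (x - y) = 0" if zS: "z \<in> S" for z
  proof -
    define w where "w = x - y"
    define c where "c = cinner z w"
    have "(norm w)\<^sup>2 \<le> (norm w)\<^sup>2 - 2 * r * (cmod c)\<^sup>2 + r\<^sup>2 * (cmod c)\<^sup>2 * (norm z)\<^sup>2" if r: "r > 0" for r
    proof -
      have inS: "y + (complex_of_real r * c) *\<^sub>C z \<in> S"
        by (intro csubspace_add[OF sub] csubspace_scaleC[OF sub] yS zS)
      have "(norm w)\<^sup>2 \<le> (norm (x - (y + (complex_of_real r * c) *\<^sub>C z)))\<^sup>2"
        using yD Dle[OF inS] unfolding w_def by (meson order_trans)
      also have "x - (y + (complex_of_real r * c) *\<^sub>C z) = w - (complex_of_real r * c) *\<^sub>C z"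
        by (simp add: w_def)
      also have "(norm \<dots>)\<^sup>2 = (norm w)\<^sup>2 - 2 * Re (complex_of_real r * c * cinner w z)
          + (cmod (complex_of_real r * c))\<^sup>2 * (norm z)\<^sup>2"
        by (rule norm_sq_diff_scale)
      also have "Re (complex_of_real r * c * cinner w z) = r * (cmod c)\<^sup>2"
      proof -
        have "cinner w z = cnj c" unfolding c_def by (rule cinner_cnj)
        then have "complex_of_real r * c * cinner w z = complex_of_real (r * (cmod c)\<^sup>2)"
          using complex_norm_square[of c] by (simp add: mult.assoc)
        then show ?thesis by (simp only: Re_complex_of_real)
      qed
      also have "(cmod (complex_of_real r * c))\<^sup>2 = r\<^sup>2 * (cmod c)\<^sup>2"
        using r by (simp add: norm_mult power_mult_distrib)
      finally show ?thesis by simp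
    qed
    then have A: "2 * (cmod c)\<^sup>2 \<le> r * (cmod c)\<^sup>2 * (norm z)\<^sup>2" if "r > 0" for r
    proof -
      have "r * (2 * (cmod c)\<^sup>2) \<le> r * (r * (cmod c)\<^sup>2 * (norm z)\<^sup>2)"
        using \<open>\<And>r. r > 0 \<Longrightarrow> _\<close>[OF that] by (simp add: algebra_simps power2_eq_square)
      then show ?thesis using that by simp
    qed
    define r where "r = 1 / ((norm z)\<^sup>2 + 1)"
    have np: "(norm z)\<^sup>2 + 1 > 0" by (simp add: add_nonneg_pos)
    have rpos: "r > 0" unfolding r_def using np by simp
    have rn: "r * (norm z)\<^sup>2 \<le> 1" unfolding r_def using np by (simp add: field_simps)
    then have "r * (cmod c)\<^sup>2 * (norm z)\<^sup>2 \<le> (cmod c)\<^sup>2"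
      using mult_right_mono[OF rn, of "(cmod c)\<^sup>2"] by (simp add: algebra_simps)
    then have "(cmod c)\<^sup>2 \<le> 0" using A[OF rpos] by linarith
    then show ?thesis unfolding c_def w_def by simp
  qed
  show ?thesis using yS orth by blast
qed

lemma proj_unique:
  assumes S: "csubspace S" and y1: "y1 \<in> S" "\<forall>z\<in>S. cinner z (x - y1) = 0"
    and y2: "y2 \<in> S" "\<forall>z\<in>S. cinner z (x - y2) = 0"
  shows "y1 = (y2::'a::complex_inner)"
proof -
  have d: "y1 - y2 \<in> S" using csubspace_diff[OF S y1(1) y2(1)] .
  have "cinner (y1 - y2) (x - y2) - cinner (y1 - y2) (x - y1) = 0" using d y1 y2 by simp
  then have "cinner (y1 - y2) (y1 - y2) = 0"
    by (simp add: cinner_diff_right[symmetric])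
  then show ?thesis by (simp add: cinner_eq_zero_iff)
qed

lemma proj_char:
  fixes S :: "'a::chilbert_space set"
  assumes "closed_csubspace S"
  shows "proj S x \<in> S" "\<forall>z\<in>S. cinner z (x - proj S x) = 0"
proof -
  have sub: "csubspace S" using assms by (simp add: closed_csubspace_def)
  obtain y where y: "y \<in> S" "\<forall>z\<in>S. cinner z (x - y) = 0" using proj_exists[OF assms] by blast
  have "proj S x = y" unfolding proj_def
    by (rule the_equality) (use y proj_unique[OF sub] in blast)+
  then show "proj S x \<in> S" "\<forall>z\<in>S. cinner z (x - proj S x) = 0" using y by auto
qed

lemma proj_eqI:
  fixes S :: "'a::chilbert_space set"
  assumes "closed_csubspace S" "y \<in> S" "\<forall>z\<in>S. cinner z (x - y) = 0"
  shows "proj S x = y"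
proof -
  have sub: "csubspace S" using assms(1) by (simp add: closed_csubspace_def)
  show ?thesis using proj_unique[OF sub proj_char[OF assms(1)] assms(2,3)] .
qed


section \<open>Riesz representation and adjoints\<close>

lemma riesz:
  fixes f :: "'a::chilbert_space \<Rightarrow> complex"
  assumes add: "\<And>x y. f (x + y) = f x + f y" and sc: "\<And>c x. f (c *\<^sub>C x) = c * f x"
    and bnd: "\<And>x. cmod (f x) \<le> norm x * K"
  shows "\<exists>z. \<forall>x. f x = cinner z x"
proof -
  have bl: "bounded_linear f"
    by (rule bounded_linear_intro[where K = K]) (auto simp: add sc scaleR_scaleC scaleR_conv_C bnd)
  have f0: "f 0 = 0" using linear_simps(3)[OF bl] .
  have fd: "f (x - y) = f x - f y" for x y using linear_simps(2)[OF bl] .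
  define Ker where "Ker = {x. f x = 0}"
  have KS: "closed_csubspace Ker"
  proof -
    have "closed Ker" unfolding Ker_def
      by (intro closed_Collect_eq continuous_on_const linear_continuous_on bl)
    then show ?thesis by (simp add: closed_csubspace_def csubspace_def Ker_def f0 add sc)
  qed
  show ?thesis
  proof (cases "\<forall>x. f x = 0")
    case True
    then show ?thesis by (intro exI[of _ 0]) simp
  next
    case False
    then obtain x0 where x0: "f x0 \<noteq> 0" by blast
    define w where "w = x0 - proj Ker x0"
    have "proj Ker x0 \<in> Ker" using proj_char(1)[OF KS] .
    then have fw: "f w = f x0" unfolding w_def Ker_def by (simp add: fd)
    have wo: "\<forall>k\<in>Ker. cinner k w = 0" using proj_char(2)[OF KS] unfolding w_def by blast
    have w0: "w \<noteq> 0" using fw x0 f0 by auto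
    have ww: "cinner w w \<noteq> 0" using w0 by (simp add: cinner_eq_zero_iff)
    have key: "f x * cinner w w = f w * cinner w x" for x
    proof -
      define v where "v = f x *\<^sub>C w - f w *\<^sub>C x"
      have "f v = 0" unfolding v_def by (simp add: fd sc)
      then have "v \<in> Ker" by (simp add: Ker_def)
      then have "cinner v w = 0" using wo by blast
      then have "cinner w v = 0" by (metis cinner_cnj complex_cnj_zero)
      then show ?thesis unfolding v_def by (simp add: cinner_diff_right cinner_scaleC_right)
    qed
    show ?thesis
    proof (intro exI allI)
      fix x
      have "cinner (cnj (f w / cinner w w) *\<^sub>C w) x = f w / cinner w w * cinner w x"
        by (simp add: cinner_scaleC_left)
      also have "\<dots> = f x" using key[of x] ww by (simp add: field_simps)
      finally show "f x = cinner (cnj (f w / cinner w w) *\<^sub>C w) x" by simp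
    qed
  qed
qed

lemma adjoint_unique:
  assumes "\<forall>x y. cinner (A x) y = cinner x (B y)" "\<forall>x y. cinner (A x) y = cinner x (B' y)"
  shows "B = B'"
proof
  fix y show "B y = B' y" using assms by (intro cinner_ext) metis
qed

lemma adjoint_exists:
  fixes A :: "'a::chilbert_space \<Rightarrow> 'b::complex_inner"
  assumes A: "bounded_clinear A"
  shows "\<exists>B. \<forall>x y. cinner (A x) y = cinner x (B y)"
proof -
  obtain K where K: "\<forall>x. norm (A x) \<le> norm x * K" using A by (auto simp: bounded_clinear_def)
  have "\<exists>z. \<forall>x. cinner y (A x) = cinner z x" for y
  proof (rule riesz[where K = "norm y * K"])
    show "cinner y (A (x1 + x2)) = cinner y (A x1) + cinner y (A x2)" for x1 x2
      by (simp add: bclin_add[OF A] cinner_add_right)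
    show "cinner y (A (c *\<^sub>C x)) = c * cinner y (A x)" for c x
      by (simp add: bclin_scaleC[OF A] cinner_scaleC_right)
    show "cmod (cinner y (A x)) \<le> norm x * (norm y * K)" for x
    proof -
      have "cmod (cinner y (A x)) \<le> norm y * norm (A x)" by (rule cauchy_schwarz)
      also have "\<dots> \<le> norm y * (norm x * K)" using K by (simp add: mult_left_mono)
      finally show ?thesis by (simp add: algebra_simps)
    qed
  qed
  then obtain B where B: "\<forall>y x. cinner y (A x) = cinner (B y) x" by metis
  have "cinner (A x) y = cinner x (B y)" for x y
    using B cinner_cnj by metis
  then show ?thesis by blast
qed

lemma adjoint_eqI: "\<forall>x y. cinner (A x) y = cinner x (B y) \<Longrightarrow> adjoint A = B"
  unfolding adjoint_def
proof (rule the_equality)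
  assume a: "\<forall>x y. cinner (A x) y = cinner x (B y)"
  then show "\<forall>x y. cinner (A x) y = cinner x (B y)" .
  show "B' = B" if "\<forall>x y. cinner (A x) y = cinner x (B' y)" for B'
    using adjoint_unique[OF that a] .
qed

lemma adjoint_prop:
  fixes A :: "'a::chilbert_space \<Rightarrow> 'b::complex_inner"
  assumes "bounded_clinear A"
  shows "cinner (A x) y = cinner x (adjoint A y)"
  using adjoint_exists[OF assms] adjoint_eqI by metis

lemma adjoint_prop2:
  fixes A :: "'a::chilbert_space \<Rightarrow> 'b::complex_inner"
  assumes "bounded_clinear A"
  shows "cinner y (A x) = cinner (adjoint A y) x"
  using adjoint_prop[OF assms, of x y] cinner_cnj by metis

lemma adjoint_bclin:
  fixes A :: "'a::chilbert_space \<Rightarrow> 'b::complex_inner"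
  assumes A: "bounded_clinear A"
  shows "bounded_clinear (adjoint A)"
proof -
  obtain K0 where K0: "\<forall>x. norm (A x) \<le> norm x * K0" using A by (auto simp: bounded_clinear_def)
  define K where "K = max K0 0"
  have K: "\<forall>x. norm (A x) \<le> norm x * K"
    using K0 unfolding K_def by (meson max.cobounded1 mult_left_mono norm_ge_zero order_trans)
  have Kp: "K \<ge> 0" by (simp add: K_def)
  have add: "adjoint A (y1 + y2) = adjoint A y1 + adjoint A y2" for y1 y2
    by (rule cinner_ext) (simp add: adjoint_prop[OF A, symmetric] cinner_add_right)
  have sc: "adjoint A (c *\<^sub>C y) = c *\<^sub>C adjoint A y" for c y
    by (rule cinner_ext) (simp add: adjoint_prop[OF A, symmetric] cinner_scaleC_right)
  have bd: "norm (adjoint A y) \<le> norm y * K" for y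
  proof (cases "adjoint A y = 0")
    case True
    then show ?thesis using Kp by simp
  next
    case False
    let ?b = "adjoint A y"
    have "(norm ?b)\<^sup>2 = Re (cinner ?b ?b)" by (rule norm_sq_cinner)
    also have "cinner ?b ?b = cinner (A ?b) y" by (simp add: adjoint_prop[OF A])
    also have "Re \<dots> \<le> cmod (cinner (A ?b) y)" by (rule complex_Re_le_cmod)
    also have "\<dots> \<le> norm (A ?b) * norm y" by (rule cauchy_schwarz)
    also have "\<dots> \<le> (norm ?b * K) * norm y" using K by (simp add: mult_right_mono)
    finally have "norm ?b * norm ?b \<le> norm ?b * (norm y * K)" by (simp add: power2_eq_square algebra_simps)
    then show ?thesis using False by simp
  qed
  show ?thesis unfolding bounded_clinear_def clinear_def using add sc bd by blast
qed


section \<open>Maximal commuting subspace\<close>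

lemma comm_inv_ccspan:
  fixes R :: "nat \<Rightarrow> 'a::chilbert_space \<Rightarrow> 'a"
  assumes bR: "\<forall>i<n. bounded_clinear (R i)"
    and inv: "\<forall>i<n. \<forall>x\<in>X. adjoint (R i) x \<in> closure (cspan X)"
    and comm: "\<forall>x\<in>X. \<forall>i<n. \<forall>j<n. adjoint (R i) (adjoint (R j) x) = adjoint (R j) (adjoint (R i) x)"
  shows "comm_inv_subspace n R (closure (cspan X))"
proof -
  let ?V = "closure (cspan X)"
  have "adjoint (R i) ` ?V \<subseteq> ?V" if i: "i < n" for i
  proof -
    have ba: "bounded_clinear (adjoint (R i))" using adjoint_bclin bR i by blast
    have "?V \<subseteq> adjoint (R i) -` ?V"
      by (rule ccspan_least[OF closed_csubspace_vimage[OF ba closed_csubspace_ccspan]])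
        (use inv i in auto)
    then show ?thesis by blast
  qed
  moreover have "\<forall>h\<in>?V. adjoint (R i) (adjoint (R j) h) = adjoint (R j) (adjoint (R i) h)"
    if i: "i < n" and j: "j < n" for i j
  proof -
    have bi: "bounded_clinear (adjoint (R i))" using adjoint_bclin bR i by blast
    have bj: "bounded_clinear (adjoint (R j))" using adjoint_bclin bR j by blast
    have "?V \<subseteq> {h. adjoint (R i) (adjoint (R j) h) = adjoint (R j) (adjoint (R i) h)}"
      by (rule ccspan_least[OF closed_csubspace_eq[OF bclin_comp[OF bi bj] bclin_comp[OF bj bi]]])
        (use comm i j in auto)
    then show ?thesis by blast
  qed
  ultimately show ?thesis
    unfolding comm_inv_subspace_def using closed_csubspace_ccspan by blast
qed

lemma max_comm_space_eqI:
  assumes "comm_inv_subspace n R M" "\<forall>S. comm_inv_subspace n R S \<longrightarrow> S \<subseteq> M"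
  shows "max_comm_space n R = M"
  unfolding max_comm_space_def
  by (rule the_equality) (use assms in blast)+

lemma max_comm_space_char:
  fixes R :: "nat \<Rightarrow> 'a::chilbert_space \<Rightarrow> 'a"
  assumes bR: "\<forall>i<n. bounded_clinear (R i)"
  shows "comm_inv_subspace n R (max_comm_space n R)"
    "comm_inv_subspace n R S \<Longrightarrow> S \<subseteq> max_comm_space n R"
proof -
  define X where "X = \<Union>{S. comm_inv_subspace n R S}"
  have ci: "comm_inv_subspace n R (closure (cspan X))"
  proof (rule comm_inv_ccspan[OF bR])
    show "\<forall>i<n. \<forall>x\<in>X. adjoint (R i) x \<in> closure (cspan X)"
    proof (intro allI impI ballI)
      fix i x assume i: "i < n" and x: "x \<in> X"
      then obtain S where S: "comm_inv_subspace n R S" "x \<in> S" unfolding X_def by blast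
      then have "adjoint (R i) x \<in> S" using i unfolding comm_inv_subspace_def by blast
      then have "adjoint (R i) x \<in> X" using S(1) unfolding X_def by blast
      then show "adjoint (R i) x \<in> closure (cspan X)" using ccspan_superset by blast
    qed
    show "\<forall>x\<in>X. \<forall>i<n. \<forall>j<n. adjoint (R i) (adjoint (R j) x) = adjoint (R j) (adjoint (R i) x)"
    proof (intro allI impI ballI)
      fix i j x assume x: "x \<in> X" and i: "i < n" and j: "j < n"
      then obtain S where S: "comm_inv_subspace n R S" "x \<in> S" unfolding X_def by blast
      then show "adjoint (R i) (adjoint (R j) x) = adjoint (R j) (adjoint (R i) x)"
        using i j unfolding comm_inv_subspace_def by blast
    qed
  qed
  have mx: "\<forall>S. comm_inv_subspace n R S \<longrightarrow> S \<subseteq> closure (cspan X)"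
  proof (intro allI impI)
    fix S assume "comm_inv_subspace n R S"
    then have "S \<subseteq> X" unfolding X_def by blast
    then show "S \<subseteq> closure (cspan X)" using ccspan_superset[of X] by blast
  qed
  have eq: "max_comm_space n R = closure (cspan X)" by (rule max_comm_space_eqI[OF ci mx])
  show "comm_inv_subspace n R (max_comm_space n R)" using ci eq by simp
  show "comm_inv_subspace n R S \<Longrightarrow> S \<subseteq> max_comm_space n R" using mx eq by simp
qed

section \<open>Direct sums\<close>

lemma dsum_op_apply[simp]: "dsum_op A B (x, y) = (A x, B y)"
  by (simp add: dsum_op_def)

lemma bclin_dsum:
  fixes A :: "'a::complex_inner \<Rightarrow> 'a" and B :: "'b::complex_inner \<Rightarrow> 'b"
  assumes A: "bounded_clinear A" and B: "bounded_clinear B"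
  shows "bounded_clinear (dsum_op A B)"
proof -
  obtain K0 where K0: "\<forall>x. norm (A x) \<le> norm x * K0" using A by (auto simp: bounded_clinear_def)
  obtain L0 where L0: "\<forall>x. norm (B x) \<le> norm x * L0" using B by (auto simp: bounded_clinear_def)
  define K where "K = max K0 0"
  define L where "L = max L0 0"
  have K: "\<forall>x. norm (A x) \<le> norm x * K"
    using K0 unfolding K_def by (meson max.cobounded1 mult_left_mono norm_ge_zero order_trans)
  have L: "\<forall>x. norm (B x) \<le> norm x * L"
    using L0 unfolding L_def by (meson max.cobounded1 mult_left_mono norm_ge_zero order_trans)
  have Kp: "K \<ge> 0" "L \<ge> 0" by (simp_all add: K_def L_def)
  have bd: "norm (dsum_op A B p) \<le> norm p * (K + L)" for p
  proof -
    obtain x y where p: "p = (x, y)" by force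
    have "norm (A x, B y) \<le> norm (A x) + norm (B y)" by (rule norm_Pair_le)
    also have "\<dots> \<le> norm x * K + norm y * L" using K L by (simp add: add_mono)
    also have "\<dots> \<le> norm p * K + norm p * L"
      using mult_right_mono[OF norm_fst_le[of x y] Kp(1)] mult_right_mono[OF norm_snd_le[of y x] Kp(2)] p
      by simp
    finally show ?thesis using p by (simp add: distrib_left)
  qed
  have "clinear (dsum_op A B)"
    unfolding clinear_def dsum_op_def scaleC_prod_def
    by (auto simp: bclin_add[OF A] bclin_add[OF B] bclin_scaleC[OF A] bclin_scaleC[OF B] split: prod.splits)
  then show ?thesis unfolding bounded_clinear_def using bd by blast
qed

lemma adjoint_dsum:
  fixes A :: "'a::chilbert_space \<Rightarrow> 'a" and B :: "'b::chilbert_space \<Rightarrow> 'b"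
  assumes A: "bounded_clinear A" and B: "bounded_clinear B"
  shows "adjoint (dsum_op A B) = dsum_op (adjoint A) (adjoint B)"
  by (rule adjoint_eqI) (auto simp: cinner_prod_def dsum_op_def adjoint_prop[OF A] adjoint_prop[OF B] split: prod.splits)

lemma closed_csubspace_Times:
  assumes "closed_csubspace (L::'a::complex_inner set)" "closed_csubspace (M::'b::complex_inner set)"
  shows "closed_csubspace (L \<times> M)"
  using assms unfolding closed_csubspace_def csubspace_def
  by (auto simp: closed_Times scaleC_prod_def zero_prod_def)


theorem dsum_part:
  fixes R :: "nat \<Rightarrow> 'a::chilbert_space \<Rightarrow> 'a"
    and T :: "nat \<Rightarrow> 'b::chilbert_space \<Rightarrow> 'b"
  assumes bR: "\<forall>i<n. bounded_clinear (R i)"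
    and bT: "\<forall>i<n. bounded_clinear (T i)"
  shows "max_comm_space n (\<lambda>i. dsum_op (R i) (T i))
           = max_comm_space n R \<times> max_comm_space n T
       \<and> (\<forall>i<n. \<forall>x\<in>max_comm_space n R. \<forall>y\<in>max_comm_space n T.
            max_comm_piece n (\<lambda>i. dsum_op (R i) (T i)) i (x, y)
              = (max_comm_piece n R i x, max_comm_piece n T i y))"
proof -
  define D where "D = (\<lambda>i. dsum_op (R i) (T i))"
  define Lc where "Lc = max_comm_space n R"
  define Mc where "Mc = max_comm_space n T"
  have bD: "\<forall>i<n. bounded_clinear (D i)" unfolding D_def using bR bT by (simp add: bclin_dsum)
  have adD: "adjoint (D i) = dsum_op (adjoint (R i)) (adjoint (T i))" if i: "i < n" for i
    unfolding D_def using bR bT i by (simp add: adjoint_dsum)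
  have cR: "comm_inv_subspace n R Lc" using max_comm_space_char(1)[OF bR] Lc_def by simp
  have cT: "comm_inv_subspace n T Mc" using max_comm_space_char(1)[OF bT] Mc_def by simp
  have cR1: "closed_csubspace Lc" "\<And>i. i < n \<Longrightarrow> adjoint (R i) ` Lc \<subseteq> Lc"
    "\<And>h i j. h \<in> Lc \<Longrightarrow> i < n \<Longrightarrow> j < n \<Longrightarrow> adjoint (R i) (adjoint (R j) h) = adjoint (R j) (adjoint (R i) h)"
    using cR unfolding comm_inv_subspace_def by blast+
  have cT1: "closed_csubspace Mc" "\<And>i. i < n \<Longrightarrow> adjoint (T i) ` Mc \<subseteq> Mc"
    "\<And>h i j. h \<in> Mc \<Longrightarrow> i < n \<Longrightarrow> j < n \<Longrightarrow> adjoint (T i) (adjoint (T j) h) = adjoint (T j) (adjoint (T i) h)"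
    using cT unfolding comm_inv_subspace_def by blast+
  have clLM: "closed_csubspace (Lc \<times> Mc)"
    using cR1(1) cT1(1) by (rule closed_csubspace_Times)
  have ciLM: "comm_inv_subspace n D (Lc \<times> Mc)"
    unfolding comm_inv_subspace_def
  proof (intro conjI clLM allI impI ballI)
    fix i assume i: "i < n"
    show "adjoint (D i) ` (Lc \<times> Mc) \<subseteq> Lc \<times> Mc"
    proof
      fix p assume "p \<in> adjoint (D i) ` (Lc \<times> Mc)"
      then obtain x y where xy: "x \<in> Lc" "y \<in> Mc" "p = adjoint (D i) (x, y)" by blast
      have "p = (adjoint (R i) x, adjoint (T i) y)" using xy(3) adD[OF i] by simp
      moreover have "adjoint (R i) x \<in> Lc" using cR1(2)[OF i] xy(1) by blast
      moreover have "adjoint (T i) y \<in> Mc" using cT1(2)[OF i] xy(2) by blast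
      ultimately show "p \<in> Lc \<times> Mc" by simp
    qed
  next
    fix h i j assume h: "h \<in> Lc \<times> Mc" and i: "i < n" and j: "j < n"
    obtain x y where xy: "h = (x, y)" "x \<in> Lc" "y \<in> Mc" using h by blast
    show "adjoint (D i) (adjoint (D j) h) = adjoint (D j) (adjoint (D i) h)"
      using cR1(3)[OF xy(2) i j] cT1(3)[OF xy(3) i j] by (simp add: xy(1) adD[OF i] adD[OF j])
  qed
  have mx: "S \<subseteq> Lc \<times> Mc" if S: "comm_inv_subspace n D S" for S
  proof -
    have ciS: "\<forall>i<n. \<forall>h\<in>S. adjoint (D i) h \<in> S"
      "\<forall>h\<in>S. \<forall>i<n. \<forall>j<n. adjoint (D i) (adjoint (D j) h) = adjoint (D j) (adjoint (D i) h)"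
      using S unfolding comm_inv_subspace_def by blast+
    have "comm_inv_subspace n R (closure (cspan (fst ` S)))"
    proof (rule comm_inv_ccspan[OF bR])
      show "\<forall>i<n. \<forall>x\<in>fst ` S. adjoint (R i) x \<in> closure (cspan (fst ` S))"
      proof (intro allI impI ballI)
        fix i x assume i: "i < n" and x: "x \<in> fst ` S"
        then obtain h where h: "h \<in> S" "x = fst h" by blast
        obtain a b where ab: "h = (a, b)" by force
        have "adjoint (R i) x = fst (adjoint (D i) h)" using h(2) by (simp add: ab adD[OF i])
        moreover have "adjoint (D i) h \<in> S" using ciS(1) i h(1) by blast
        then have "fst (adjoint (D i) h) \<in> fst ` S" by (rule imageI)
        ultimately show "adjoint (R i) x \<in> closure (cspan (fst ` S))"
          using ccspan_superset[of "fst ` S"] by auto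
      qed
      show "\<forall>x\<in>fst ` S. \<forall>i<n. \<forall>j<n. adjoint (R i) (adjoint (R j) x) = adjoint (R j) (adjoint (R i) x)"
      proof (intro allI impI ballI)
        fix i j x assume x: "x \<in> fst ` S" and i: "i < n" and j: "j < n"
        then obtain h where h: "h \<in> S" "x = fst h" by blast
        obtain a b where ab: "h = (a, b)" by force
        have e: "adjoint (D i) (adjoint (D j) h) = adjoint (D j) (adjoint (D i) h)"
          using ciS(2) h(1) i j by blast
        show "adjoint (R i) (adjoint (R j) x) = adjoint (R j) (adjoint (R i) x)"
          using e h(2) by (simp add: ab adD[OF i] adD[OF j])
      qed
    qed
    then have "closure (cspan (fst ` S)) \<subseteq> Lc" unfolding Lc_def by (rule max_comm_space_char(2)[OF bR])
    then have f: "fst ` S \<subseteq> Lc" using ccspan_superset[of "fst ` S"] by (rule order_trans[rotated])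
    have "comm_inv_subspace n T (closure (cspan (snd ` S)))"
    proof (rule comm_inv_ccspan[OF bT])
      show "\<forall>i<n. \<forall>x\<in>snd ` S. adjoint (T i) x \<in> closure (cspan (snd ` S))"
      proof (intro allI impI ballI)
        fix i x assume i: "i < n" and x: "x \<in> snd ` S"
        then obtain h where h: "h \<in> S" "x = snd h" by blast
        obtain a b where ab: "h = (a, b)" by force
        have "adjoint (T i) x = snd (adjoint (D i) h)" using h(2) by (simp add: ab adD[OF i])
        moreover have "adjoint (D i) h \<in> S" using ciS(1) i h(1) by blast
        then have "snd (adjoint (D i) h) \<in> snd ` S" by (rule imageI)
        ultimately show "adjoint (T i) x \<in> closure (cspan (snd ` S))"
          using ccspan_superset[of "snd ` S"] by auto
      qed
      show "\<forall>x\<in>snd ` S. \<forall>i<n. \<forall>j<n. adjoint (T i) (adjoint (T j) x) = adjoint (T j) (adjoint (T i) x)"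
      proof (intro allI impI ballI)
        fix i j x assume x: "x \<in> snd ` S" and i: "i < n" and j: "j < n"
        then obtain h where h: "h \<in> S" "x = snd h" by blast
        obtain a b where ab: "h = (a, b)" by force
        have e: "adjoint (D i) (adjoint (D j) h) = adjoint (D j) (adjoint (D i) h)"
          using ciS(2) h(1) i j by blast
        show "adjoint (T i) (adjoint (T j) x) = adjoint (T j) (adjoint (T i) x)"
          using e h(2) by (simp add: ab adD[OF i] adD[OF j])
      qed
    qed
    then have "closure (cspan (snd ` S)) \<subseteq> Mc" unfolding Mc_def by (rule max_comm_space_char(2)[OF bT])
    then have g: "snd ` S \<subseteq> Mc" using ccspan_superset[of "snd ` S"] by (rule order_trans[rotated])
    show ?thesis
    proof
      fix h assume "h \<in> S"
      then have "fst h \<in> Lc" "snd h \<in> Mc" using f g by blast+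
      then show "h \<in> Lc \<times> Mc" by (simp add: mem_Times_iff)
    qed
  qed
  have eq: "max_comm_space n D = Lc \<times> Mc"
    by (rule max_comm_space_eqI[OF ciLM]) (use mx in blast)
  have piece: "max_comm_piece n D i (x, y) = (max_comm_piece n R i x, max_comm_piece n T i y)"
    if i: "i < n" for i x y
  proof -
    have cl1: "closed_csubspace Lc" and cl2: "closed_csubspace Mc"
      using cR cT unfolding comm_inv_subspace_def by auto
    have "proj (Lc \<times> Mc) (R i x, T i y) = (proj Lc (R i x), proj Mc (T i y))"
    proof (rule proj_eqI[OF clLM])
      show "(proj Lc (R i x), proj Mc (T i y)) \<in> Lc \<times> Mc"
        using proj_char(1)[OF cl1] proj_char(1)[OF cl2] by blast
      show "\<forall>z\<in>Lc \<times> Mc. cinner z ((R i x, T i y) - (proj Lc (R i x), proj Mc (T i y))) = 0"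
        using proj_char(2)[OF cl1] proj_char(2)[OF cl2] by (auto simp: cinner_prod_def)
    qed
    then show ?thesis
      unfolding max_comm_piece_def eq[unfolded D_def] D_def Lc_def Mc_def by simp
  qed
  show ?thesis using eq piece unfolding D_def Lc_def Mc_def by blast
qed



lemma clinear_diff: "clinear f \<Longrightarrow> f (x - y) = f x - f y"
  unfolding clinear_def by (metis add_diff_cancel diff_add_cancel)

theorem tensor_part:
  fixes R :: "nat \<Rightarrow> 'a::chilbert_space \<Rightarrow> 'a"
    and tp :: "'a \<Rightarrow> 'b::chilbert_space \<Rightarrow> 'c::chilbert_space"
    and A :: "nat \<Rightarrow> 'c \<Rightarrow> 'c"
  assumes bR: "\<forall>i<n. bounded_clinear (R i)"
    and ht: "hilbert_tensor tp" and tA: "\<forall>i<n. is_tensor_id tp (R i) (A i)"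
  shows "max_comm_space n A = closure (cspan {tp x y | x y. x \<in> max_comm_space n R})
      \<and> (\<forall>i<n. \<forall>x\<in>max_comm_space n R. \<forall>y.
                   max_comm_piece n A i (tp x y) = tp (max_comm_piece n R i x) y)"
proof -
  have lin1: "clinear (\<lambda>x. tp x y)" for y using ht by (simp add: hilbert_tensor_def)
  have tp_add: "tp (x + x') y = tp x y + tp x' y" for x x' y
    using lin1[of y] by (simp add: clinear_def)
  have tp_sc: "tp (c *\<^sub>C x) y = c *\<^sub>C tp x y" for c x y
    using lin1[of y] by (simp add: clinear_def)
  have tp_diff: "tp (x - x') y = tp x y - tp x' y" for x x' y
    using clinear_diff[OF lin1[of y]] .
  have tp_in: "cinner (tp x y) (tp x' y') = cinner x x' * cinner y y'" for x x' y y'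
    using ht by (simp add: hilbert_tensor_def)
  have dense: "closure (cspan {tp x y | x y. True}) = UNIV"
    using ht by (simp add: hilbert_tensor_def)
  have tp_norm: "norm (tp x y) = norm x * norm y" for x y
  proof -
    have "(norm (tp x y))\<^sup>2 = Re (cinner x x * cinner y y)" by (simp add: norm_sq_cinner tp_in)
    also have "\<dots> = (norm x * norm y)\<^sup>2" by (simp add: cinner_self power_mult_distrib)
    finally show ?thesis by (simp add: power2_eq_iff_nonneg)
  qed
  have bA: "\<forall>i<n. bounded_clinear (A i)" using tA by (simp add: is_tensor_id_def)
  have Atp: "A i (tp x y) = tp (R i x) y" if "i < n" for i x y
    using tA that by (simp add: is_tensor_id_def)
  have adjA: "adjoint (A i) (tp x y) = tp (adjoint (R i) x) y" if i: "i < n" for i x y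
  proof -
    have bAi: "bounded_clinear (A i)" and bRi: "bounded_clinear (R i)" using bA bR i by auto
    define v where "v = adjoint (A i) (tp x y) - tp (adjoint (R i) x) y"
    have "\<forall>g\<in>{tp x y | x y. True}. cinner g v = 0"
    proof
      fix g assume "g \<in> {tp x y | x y. True}"
      then obtain x' y' where g: "g = tp x' y'" by blast
      have "cinner g v = cinner (A i g) (tp x y) - cinner x' (adjoint (R i) x) * cinner y' y"
        by (simp add: v_def cinner_diff_right adjoint_prop[OF bAi] g tp_in)
      also have "\<dots> = 0" by (simp add: g Atp[OF i] tp_in adjoint_prop[OF bRi])
      finally show "cinner g v = 0" .
    qed
    then have "v = 0" using dense_orth[OF dense] by blast
    then show ?thesis by (simp add: v_def)
  qed
  define Lc where "Lc = max_comm_space n R"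
  have cR: "comm_inv_subspace n R Lc" using max_comm_space_char(1)[OF bR] Lc_def by simp
  have cR1: "closed_csubspace Lc" "\<And>i. i < n \<Longrightarrow> adjoint (R i) ` Lc \<subseteq> Lc"
    "\<And>h i j. h \<in> Lc \<Longrightarrow> i < n \<Longrightarrow> j < n \<Longrightarrow> adjoint (R i) (adjoint (R j) h) = adjoint (R j) (adjoint (R i) h)"
    using cR unfolding comm_inv_subspace_def by blast+
  define G where "G = {tp x y | x y. x \<in> Lc}"
  define N where "N = closure (cspan G)"
  have clN: "closed_csubspace N" unfolding N_def by (rule closed_csubspace_ccspan)
  have GN: "G \<subseteq> N" unfolding N_def by (rule ccspan_superset)
  have ortho_N: "\<forall>v\<in>N. cinner v (tp w y) = 0" if w: "\<forall>z\<in>Lc. cinner z w = 0" for w y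
  proof -
    have "N \<subseteq> {v. cinner v (tp w y) = 0}" unfolding N_def
    proof (rule ccspan_least[OF closed_csubspace_orth])
      show "G \<subseteq> {v. cinner v (tp w y) = 0}"
        using w by (auto simp: G_def tp_in)
    qed
    then show ?thesis by blast
  qed
  have ciN: "comm_inv_subspace n A N" unfolding N_def
  proof (rule comm_inv_ccspan[OF bA])
    show "\<forall>i<n. \<forall>x\<in>G. adjoint (A i) x \<in> closure (cspan G)"
    proof (intro allI impI ballI)
      fix i g assume i: "i < n" and g: "g \<in> G"
      then obtain x y where xy: "g = tp x y" "x \<in> Lc" unfolding G_def by blast
      have "adjoint (R i) x \<in> Lc" using cR1(2)[OF i] xy(2) by blast
      then have "adjoint (A i) g \<in> G" unfolding G_def using adjA[OF i] xy(1) by blast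
      then show "adjoint (A i) g \<in> closure (cspan G)" using ccspan_superset by blast
    qed
    show "\<forall>x\<in>G. \<forall>i<n. \<forall>j<n. adjoint (A i) (adjoint (A j) x) = adjoint (A j) (adjoint (A i) x)"
    proof (intro allI impI ballI)
      fix i j g assume g: "g \<in> G" and i: "i < n" and j: "j < n"
      then obtain x y where xy: "g = tp x y" "x \<in> Lc" unfolding G_def by blast
      show "adjoint (A i) (adjoint (A j) g) = adjoint (A j) (adjoint (A i) g)"
        using cR1(3)[OF xy(2) i j] by (simp add: xy(1) adjA[OF i] adjA[OF j])
    qed
  qed
  have NS: "N \<subseteq> max_comm_space n A" by (rule max_comm_space_char(2)[OF bA ciN])
  have part_ex: "\<exists>z. \<forall>x. cinner (tp x y) h = cinner x z" for h y
  proof -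
    have "\<exists>z. \<forall>x. cinner h (tp x y) = cinner z x"
    proof (rule riesz[where K = "norm h * norm y"])
      show "cinner h (tp (x1 + x2) y) = cinner h (tp x1 y) + cinner h (tp x2 y)" for x1 x2
        by (simp add: tp_add cinner_add_right)
      show "cinner h (tp (c *\<^sub>C x) y) = c * cinner h (tp x y)" for c x
        by (simp add: tp_sc cinner_scaleC_right)
      show "cmod (cinner h (tp x y)) \<le> norm x * (norm h * norm y)" for x
        using cauchy_schwarz[of h "tp x y"] by (simp add: tp_norm algebra_simps)
    qed
    then obtain z where z: "\<forall>x. cinner h (tp x y) = cinner z x" by blast
    have "cinner (tp x y) h = cinner x z" for x
      using z cinner_cnj by metis
    then show ?thesis by blast
  qed
  define part where "part h y = (SOME z. \<forall>x. cinner (tp x y) h = cinner x z)" for h y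
  have part: "cinner (tp x y) h = cinner x (part h y)" for x y h
    unfolding part_def using someI_ex[OF part_ex[of y h]] by blast
  have part_adj: "part (adjoint (A i) h) y = adjoint (R i) (part h y)" if i: "i < n" for i h y
  proof (rule cinner_ext)
    fix x
    have bAi: "bounded_clinear (A i)" and bRi: "bounded_clinear (R i)" using bA bR i by auto
    have "cinner x (part (adjoint (A i) h) y) = cinner (tp x y) (adjoint (A i) h)" by (simp add: part)
    also have "\<dots> = cinner (A i (tp x y)) h" by (simp add: adjoint_prop[OF bAi])
    also have "\<dots> = cinner (R i x) (part h y)" by (simp add: Atp[OF i] part)
    also have "\<dots> = cinner x (adjoint (R i) (part h y))" by (simp add: adjoint_prop[OF bRi])
    finally show "cinner x (part (adjoint (A i) h) y) = cinner x (adjoint (R i) (part h y))" .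
  qed
  define S where "S = max_comm_space n A"
  have cS: "comm_inv_subspace n A S" using max_comm_space_char(1)[OF bA] S_def by simp
  have cS1: "\<And>i. i < n \<Longrightarrow> adjoint (A i) ` S \<subseteq> S"
    "\<And>h i j. h \<in> S \<Longrightarrow> i < n \<Longrightarrow> j < n \<Longrightarrow> adjoint (A i) (adjoint (A j) h) = adjoint (A j) (adjoint (A i) h)"
    using cS unfolding comm_inv_subspace_def by blast+
  define X where "X = {part h y | h y. h \<in> S}"
  have ciX: "comm_inv_subspace n R (closure (cspan X))"
  proof (rule comm_inv_ccspan[OF bR])
    show "\<forall>i<n. \<forall>x\<in>X. adjoint (R i) x \<in> closure (cspan X)"
    proof (intro allI impI ballI)
      fix i x assume i: "i < n" and x: "x \<in> X"
      then obtain h y where hy: "x = part h y" "h \<in> S" unfolding X_def by blast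
      have "adjoint (A i) h \<in> S" using cS1(1)[OF i] hy(2) by blast
      moreover have "adjoint (R i) x = part (adjoint (A i) h) y" by (simp add: hy(1) part_adj[OF i])
      ultimately have "adjoint (R i) x \<in> X" unfolding X_def by blast
      then show "adjoint (R i) x \<in> closure (cspan X)" using ccspan_superset by blast
    qed
    show "\<forall>x\<in>X. \<forall>i<n. \<forall>j<n. adjoint (R i) (adjoint (R j) x) = adjoint (R j) (adjoint (R i) x)"
    proof (intro allI impI ballI)
      fix i j x assume x: "x \<in> X" and i: "i < n" and j: "j < n"
      then obtain h y where hy: "x = part h y" "h \<in> S" unfolding X_def by blast
      have "adjoint (R i) (adjoint (R j) x) = part (adjoint (A i) (adjoint (A j) h)) y"
        by (simp add: hy(1) part_adj[OF i] part_adj[OF j])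
      also have "\<dots> = part (adjoint (A j) (adjoint (A i) h)) y" using cS1(2)[OF hy(2) i j] by simp
      also have "\<dots> = adjoint (R j) (adjoint (R i) x)"
        by (simp add: hy(1) part_adj[OF i] part_adj[OF j])
      finally show "adjoint (R i) (adjoint (R j) x) = adjoint (R j) (adjoint (R i) x)" .
    qed
  qed
  have XL: "X \<subseteq> Lc"
  proof -
    have "closure (cspan X) \<subseteq> Lc" unfolding Lc_def by (rule max_comm_space_char(2)[OF bR ciX])
    then show ?thesis using ccspan_superset[of X] by (rule order_trans[rotated])
  qed
  have clL: "closed_csubspace Lc" by (rule cR1(1))
  have SN: "S \<subseteq> N"
  proof
    fix h assume hS: "h \<in> S"
    define h' where "h' = h - proj N h"
    have "\<forall>g\<in>{tp x y | x y. True}. cinner g h' = 0"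
    proof
      fix g assume "g \<in> {tp x y | x y. True}"
      then obtain x y where g: "g = tp x y" by blast
      define p where "p = proj Lc x"
      have pL: "p \<in> Lc" unfolding p_def by (rule proj_char(1)[OF clL])
      have wo: "\<forall>z\<in>Lc. cinner z (x - p) = 0" unfolding p_def by (rule proj_char(2)[OF clL])
      have g2: "g = tp p y + tp (x - p) y" by (simp add: g tp_diff)
      have 1: "cinner (tp p y) h' = 0"
        using proj_char(2)[OF clN, of h] GN pL unfolding h'_def G_def by blast
      have "part h y \<in> Lc" using XL hS unfolding X_def by blast
      then have "cinner (part h y) (x - p) = 0" using wo by blast
      then have 2: "cinner (tp (x - p) y) h = 0" by (metis part cinner_cnj complex_cnj_zero)
      have "cinner (proj N h) (tp (x - p) y) = 0"
        using ortho_N[OF wo, of y] proj_char(1)[OF clN, of h] by blast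
      then have 3: "cinner (tp (x - p) y) (proj N h) = 0" by (metis cinner_cnj complex_cnj_zero)
      show "cinner g h' = 0"
        using 1 2 3 by (simp add: g2 h'_def cinner_add_left cinner_diff_right)
    qed
    then have "h' = 0" using dense_orth[OF dense] by blast
    then have "h = proj N h" by (simp add: h'_def)
    then show "h \<in> N" using proj_char(1)[OF clN, of h] by simp
  qed
  have eq: "max_comm_space n A = N" using NS SN S_def by blast
  have piece: "max_comm_piece n A i (tp x y) = tp (max_comm_piece n R i x) y" if i: "i < n" for i x y
  proof -
    define z where "z = R i x"
    define p where "p = proj Lc z"
    have pL: "p \<in> Lc" unfolding p_def by (rule proj_char(1)[OF clL])
    have wo: "\<forall>z'\<in>Lc. cinner z' (z - p) = 0" unfolding p_def by (rule proj_char(2)[OF clL])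
    have "proj N (tp z y) = tp p y"
    proof (rule proj_eqI[OF clN])
      show "tp p y \<in> N" using GN pL unfolding G_def by blast
      show "\<forall>v\<in>N. cinner v (tp z y - tp p y) = 0"
        using ortho_N[OF wo, of y] by (simp add: tp_diff)
    qed
    then show ?thesis
      unfolding max_comm_piece_def eq by (simp add: Atp[OF i] z_def p_def Lc_def)
  qed
  show ?thesis using eq piece unfolding N_def G_def Lc_def by blast
qed


theorem corollary5:
  fixes n :: nat
    and R :: "nat \<Rightarrow> 'a::chilbert_space \<Rightarrow> 'a"
    and T :: "nat \<Rightarrow> 'b::chilbert_space \<Rightarrow> 'b"
  assumes "\<forall>i<n. bounded_clinear (R i)"
    and "\<forall>i<n. bounded_clinear (T i)"
  shows "max_comm_space n (\<lambda>i. dsum_op (R i) (T i))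
           = max_comm_space n R \<times> max_comm_space n T
       \<and> (\<forall>i<n. \<forall>x\<in>max_comm_space n R. \<forall>y\<in>max_comm_space n T.
            max_comm_piece n (\<lambda>i. dsum_op (R i) (T i)) i (x, y)
              = (max_comm_piece n R i x, max_comm_piece n T i y))
       \<and> (\<forall>(tp :: 'a \<Rightarrow> 'b \<Rightarrow> 'c::chilbert_space) (A :: nat \<Rightarrow> 'c \<Rightarrow> 'c).
            hilbert_tensor tp \<and> (\<forall>i<n. is_tensor_id tp (R i) (A i)) \<longrightarrow>
              max_comm_space n A
                = closure (cspan {tp x y | x y. x \<in> max_comm_space n R})
              \<and> (\<forall>i<n. \<forall>x\<in>max_comm_space n R. \<forall>y.
                   max_comm_piece n A i (tp x y) = tp (max_comm_piece n R i x) y))"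
  using dsum_part[OF assms(1) assms(2)] tensor_part[OF assms(1)] by blast

end
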